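(* Let $G$ be a finite group and let $k$ be the core of $|F(G)|$. Then for every $i \geq 0$, \[ \nu_{i+1}(G) = [F(G), \nu_i(G)]\, \nu_i(G)^k , \] where $\nu_i(G)^k$ denotes the subgroup generated by all $k$-th powers of elements of $\nu_i(G)$.
   Context: For a finite group $G$, $F(G)$ denotes its Fitting subgroup (the largest nilpotent normal subgroup). The $F$-central series of $G$ is defined by $\nu_0(G)=F(G)$ and, for $i\ge 0$, $\nu_{i+1}(G)$ is the smallest normal subgroup $N$ of $F(G)$ with $N\le \nu_i(G)$ such that $\nu_i(G)/N$ is centralized by $F(G)$ and is a direct product of elementary abelian groups. The core of a positive integer $n=p_1^{e_1}\cdots p_r^{e_r}$ (distinct primes $p_j$, all $e_j\ge 1$) is $p_1\cdots p_r$. *)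

theory Defs
  imports "HOL-Algebra.Algebra" "HOL-Computational_Algebra.Primes"
begin

definition comm_subgroup :: "('a, 'b) monoid_scheme \<Rightarrow> 'a set \<Rightarrow> 'a set \<Rightarrow> 'a set" where
  "comm_subgroup G A B = generate G
     {a \<otimes>\<^bsub>G\<^esub> b \<otimes>\<^bsub>G\<^esub> inv\<^bsub>G\<^esub> a \<otimes>\<^bsub>G\<^esub> inv\<^bsub>G\<^esub> b | a b. a \<in> A \<and> b \<in> B}"

primrec lower_central :: "('a, 'b) monoid_scheme \<Rightarrow> nat \<Rightarrow> 'a set" where
  "lower_central G 0 = carrier G"
| "lower_central G (Suc n) = comm_subgroup G (carrier G) (lower_central G n)"

definition nilpotent :: "('a, 'b) monoid_scheme \<Rightarrow> bool" where
  "nilpotent G \<longleftrightarrow> group G \<and> (\<exists>n. lower_central G n = {\<one>\<^bsub>G\<^esub>})"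

definition Fitting :: "('a, 'b) monoid_scheme \<Rightarrow> 'a set" where
  "Fitting G = (THE N. N \<lhd> G \<and> nilpotent (G\<lparr>carrier := N\<rparr>) \<and>
      (\<forall>M. M \<lhd> G \<and> nilpotent (G\<lparr>carrier := M\<rparr>) \<longrightarrow> M \<subseteq> N))"

definition elementary_abelian :: "('a, 'b) monoid_scheme \<Rightarrow> bool" where
  "elementary_abelian E \<longleftrightarrow> comm_group E \<and>
     (\<exists>p::nat. Factorial_Ring.prime p \<and> (\<forall>x \<in> carrier E. x [^]\<^bsub>E\<^esub> p = \<one>\<^bsub>E\<^esub>))"

(* Q is (isomorphic to) a direct product of finitely many elementary abelian groups;
   the factors may be taken to be subgroups of Q itself *)
definition dprod_elem_abelian :: "('a, 'b) monoid_scheme \<Rightarrow> bool" where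
  "dprod_elem_abelian Q \<longleftrightarrow> (\<exists>(I::nat set) H. finite I \<and>
     (\<forall>i \<in> I. subgroup (H i) Q \<and> elementary_abelian (Q\<lparr>carrier := H i\<rparr>)) \<and>
     Q \<cong> product_group I (\<lambda>i. Q\<lparr>carrier := H i\<rparr>))"

definition Fstep_ok :: "('a, 'b) monoid_scheme \<Rightarrow> 'a set \<Rightarrow> 'a set \<Rightarrow> bool" where
  "Fstep_ok G V N \<longleftrightarrow>
     N \<lhd> (G\<lparr>carrier := Fitting G\<rparr>) \<and> N \<subseteq> V \<and>
     (\<forall>f \<in> Fitting G. \<forall>x \<in> V. f \<otimes>\<^bsub>G\<^esub> x \<otimes>\<^bsub>G\<^esub> inv\<^bsub>G\<^esub> f \<otimes>\<^bsub>G\<^esub> inv\<^bsub>G\<^esub> x \<in> N) \<and>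
     dprod_elem_abelian ((G\<lparr>carrier := V\<rparr>) Mod N)"

primrec Fcentral :: "('a, 'b) monoid_scheme \<Rightarrow> nat \<Rightarrow> 'a set" where
  "Fcentral G 0 = Fitting G"
| "Fcentral G (Suc i) = (THE N. Fstep_ok G (Fcentral G i) N \<and>
      (\<forall>M. Fstep_ok G (Fcentral G i) M \<longrightarrow> N \<subseteq> M))"

definition core :: "nat \<Rightarrow> nat" where
  "core n = \<Prod>(prime_factors n)"

end

theory Submission
  imports Defs
begin


primrec LC :: "('a, 'b) monoid_scheme \<Rightarrow> 'a set \<Rightarrow> nat \<Rightarrow> 'a set" where
  "LC G A 0 = A"
| "LC G A (Suc n) = comm_subgroup G A (LC G A n)"

definition LC' :: "('a, 'b) monoid_scheme \<Rightarrow> 'a set \<Rightarrow> nat \<Rightarrow> 'a set" where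
  "LC' G A p = (if p = 0 then carrier G else LC G A (p - 1))"

context group begin

lemma inv_cancel_l': "g \<in> carrier G \<Longrightarrow> x \<in> carrier G \<Longrightarrow> inv g \<otimes> (g \<otimes> x) = x"
  by (simp add: m_assoc[symmetric])
lemma inv_cancel_r': "g \<in> carrier G \<Longrightarrow> x \<in> carrier G \<Longrightarrow> g \<otimes> (inv g \<otimes> x) = x"
  by (simp add: m_assoc[symmetric])

lemma conj_comm:
  assumes "g \<in> carrier G" "a \<in> carrier G" "b \<in> carrier G"
  shows "g \<otimes> (a \<otimes> b \<otimes> inv a \<otimes> inv b) \<otimes> inv g =
    (g \<otimes> a \<otimes> inv g) \<otimes> (g \<otimes> b \<otimes> inv g) \<otimes> inv (g \<otimes> a \<otimes> inv g) \<otimes> inv (g \<otimes> b \<otimes> inv g)"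
  using assms by (simp add: m_assoc inv_mult_group inv_cancel_l')

lemma comm_inv_id:
  assumes "x \<in> carrier G" "s \<in> carrier G"
  shows "x \<otimes> inv s \<otimes> inv x \<otimes> inv (inv s) = inv s \<otimes> inv (x \<otimes> s \<otimes> inv x \<otimes> inv s) \<otimes> inv (inv s)"
  using assms by (simp add: m_assoc inv_mult_group inv_cancel_l')

lemma comm_mult_id:
  assumes "x \<in> carrier G" "s \<in> carrier G" "t \<in> carrier G"
  shows "x \<otimes> (s \<otimes> t) \<otimes> inv x \<otimes> inv (s \<otimes> t) =
     (x \<otimes> s \<otimes> inv x \<otimes> inv s) \<otimes> (s \<otimes> (x \<otimes> t \<otimes> inv x \<otimes> inv t) \<otimes> inv s)"
  using assms by (simp add: m_assoc inv_mult_group inv_cancel_l')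

lemma comm_mult_left_id:
  assumes "a \<in> carrier G" "b \<in> carrier G" "s \<in> carrier G"
  shows "(a \<otimes> b) \<otimes> s \<otimes> inv (a \<otimes> b) \<otimes> inv s =
     (a \<otimes> (b \<otimes> s \<otimes> inv b \<otimes> inv s) \<otimes> inv a) \<otimes> (a \<otimes> s \<otimes> inv a \<otimes> inv s)"
  using assms by (simp add: m_assoc inv_mult_group inv_cancel_l')

lemma comm_in_normal_r:
  assumes N: "N \<lhd> G" and a: "a \<in> carrier G" and y: "y \<in> N"
  shows "a \<otimes> y \<otimes> inv a \<otimes> inv y \<in> N"
proof -
  have H: "subgroup N G" by (rule normal_imp_subgroup[OF N])
  have "a \<otimes> y \<otimes> inv a \<in> N" by (rule normal.inv_op_closed2[OF N a y])
  moreover have "inv y \<in> N" by (rule subgroup.m_inv_closed[OF H y])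
  ultimately show ?thesis by (rule subgroup.m_closed[OF H])
qed

lemma comm_in_normal_l:
  assumes N: "N \<lhd> G" and a: "a \<in> carrier G" and y: "y \<in> N"
  shows "y \<otimes> a \<otimes> inv y \<otimes> inv a \<in> N"
proof -
  have H: "subgroup N G" by (rule normal_imp_subgroup[OF N])
  have yc: "y \<in> carrier G" by (rule subgroup.mem_carrier[OF H y])
  have "inv y \<in> N" by (rule subgroup.m_inv_closed[OF H y])
  hence "a \<otimes> inv y \<otimes> inv a \<in> N" by (rule normal.inv_op_closed2[OF N a])
  hence "y \<otimes> (a \<otimes> inv y \<otimes> inv a) \<in> N" by (rule subgroup.m_closed[OF H y])
  thus ?thesis using a yc by (simp add: m_assoc)
qed

lemma comm_set_carrier:
  assumes "U \<subseteq> carrier G" "W \<subseteq> carrier G"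
  shows "{a \<otimes> b \<otimes> inv a \<otimes> inv b |a b. a \<in> U \<and> b \<in> W} \<subseteq> carrier G"
proof
  fix x assume "x \<in> {a \<otimes> b \<otimes> inv a \<otimes> inv b |a b. a \<in> U \<and> b \<in> W}"
  then obtain a b where "x = a \<otimes> b \<otimes> inv a \<otimes> inv b" "a \<in> carrier G" "b \<in> carrier G" using assms by blast
  then show "x \<in> carrier G" by simp
qed

lemma comm_subgroup_le:
  assumes "subgroup N G" "\<And>x y. x \<in> U \<Longrightarrow> y \<in> W \<Longrightarrow> x \<otimes> y \<otimes> inv x \<otimes> inv y \<in> N"
  shows "comm_subgroup G U W \<subseteq> N"
  unfolding comm_subgroup_def using assms by (intro generate_subgroup_incl) auto

lemma comm_subgroup_incl:
  assumes "x \<in> U" "y \<in> W"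
  shows "x \<otimes> y \<otimes> inv x \<otimes> inv y \<in> comm_subgroup G U W"
  unfolding comm_subgroup_def using assms by (intro generate.incl) auto

lemma comm_subgroup_subgroup:
  assumes "U \<subseteq> carrier G" "W \<subseteq> carrier G"
  shows "subgroup (comm_subgroup G U W) G"
  unfolding comm_subgroup_def by (rule generate_is_subgroup[OF comm_set_carrier[OF assms]])

lemma comm_subgroup_normal:
  assumes "U \<subseteq> carrier G" "W \<subseteq> carrier G"
   and "\<And>x g. x \<in> U \<Longrightarrow> g \<in> carrier G \<Longrightarrow> g \<otimes> x \<otimes> inv g \<in> U"
   and "\<And>x g. x \<in> W \<Longrightarrow> g \<in> carrier G \<Longrightarrow> g \<otimes> x \<otimes> inv g \<in> W"
  shows "comm_subgroup G U W \<lhd> G"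
  unfolding comm_subgroup_def
proof (rule normal_generateI)
  show "{a \<otimes> b \<otimes> inv a \<otimes> inv b |a b. a \<in> U \<and> b \<in> W} \<subseteq> carrier G" by (rule comm_set_carrier[OF assms(1,2)])
  fix h g assume h: "h \<in> {a \<otimes> b \<otimes> inv a \<otimes> inv b |a b. a \<in> U \<and> b \<in> W}" and g: "g \<in> carrier G"
  then obtain a b where ab: "h = a \<otimes> b \<otimes> inv a \<otimes> inv b" "a \<in> U" "b \<in> W" by blast
  have "g \<otimes> h \<otimes> inv g = (g \<otimes> a \<otimes> inv g) \<otimes> (g \<otimes> b \<otimes> inv g) \<otimes> inv (g \<otimes> a \<otimes> inv g) \<otimes> inv (g \<otimes> b \<otimes> inv g)"
    using ab g assms(1,2) conj_comm by blast
  thus "g \<otimes> h \<otimes> inv g \<in> {a \<otimes> b \<otimes> inv a \<otimes> inv b |a b. a \<in> U \<and> b \<in> W}"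
    using ab g assms(3,4) by blast
qed

lemma comm_generate:
  assumes N: "N \<lhd> G" and S: "S \<subseteq> carrier G" and U: "U \<subseteq> carrier G"
    and h: "\<And>x s. x \<in> U \<Longrightarrow> s \<in> S \<Longrightarrow> x \<otimes> s \<otimes> inv x \<otimes> inv s \<in> N"
    and x: "x \<in> U" and d: "d \<in> generate G S"
  shows "x \<otimes> d \<otimes> inv x \<otimes> inv d \<in> N"
  using d
proof (induction rule: generate.induct)
  case one
  then show ?case using x U N by (auto simp: normal_imp_subgroup subgroup.one_closed)
next
  case (incl h)
  then show ?case using h x by blast
next
  case (inv s)
  have xc: "x \<in> carrier G" "s \<in> carrier G" using x U inv S by auto
  have "x \<otimes> s \<otimes> inv x \<otimes> inv s \<in> N" using h x inv by blast
  hence "inv (x \<otimes> s \<otimes> inv x \<otimes> inv s) \<in> N" by (rule subgroup.m_inv_closed[OF normal_imp_subgroup[OF N]])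
  hence "inv s \<otimes> inv (x \<otimes> s \<otimes> inv x \<otimes> inv s) \<otimes> inv (inv s) \<in> N"
    by (rule normal.inv_op_closed2[OF N inv_closed[OF xc(2)]])
  then show ?case using comm_inv_id xc by simp
next
  case (eng s t)
  have sc: "s \<in> carrier G" "t \<in> carrier G" using eng generate_in_carrier S by auto
  have xc: "x \<in> carrier G" using x U by auto
  have "s \<otimes> (x \<otimes> t \<otimes> inv x \<otimes> inv t) \<otimes> inv s \<in> N"
    by (rule normal.inv_op_closed2[OF N sc(1) eng.IH(2)])
  hence "(x \<otimes> s \<otimes> inv x \<otimes> inv s) \<otimes> (s \<otimes> (x \<otimes> t \<otimes> inv x \<otimes> inv t) \<otimes> inv s) \<in> N"
    by (rule subgroup.m_closed[OF normal_imp_subgroup[OF N] eng.IH(1)])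
  then show ?case using comm_mult_id xc sc by simp
qed

lemma normal_conj: "N \<lhd> G \<Longrightarrow> x \<in> N \<Longrightarrow> g \<in> carrier G \<Longrightarrow> g \<otimes> x \<otimes> inv g \<in> N"
  by (rule normal.inv_op_closed2)

lemma normal_sub: "N \<lhd> G \<Longrightarrow> N \<subseteq> carrier G"
  by (rule subgroup.subset[OF normal_imp_subgroup])

lemma LC_normal: "A \<lhd> G \<Longrightarrow> LC G A n \<lhd> G"
proof (induction n)
  case 0 then show ?case by simp
next
  case (Suc n)
  have N: "LC G A n \<lhd> G" using Suc by blast
  show ?case unfolding LC.simps
    by (rule comm_subgroup_normal[OF normal_sub[OF Suc.prems] normal_sub[OF N] normal_conj[OF Suc.prems] normal_conj[OF N]])
qed

lemma LC_sub_Suc: assumes A: "A \<lhd> G" shows "LC G A (Suc n) \<subseteq> LC G A n"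
proof -
  have N: "LC G A n \<lhd> G" by (rule LC_normal[OF A])
  show ?thesis unfolding LC.simps
    by (rule comm_subgroup_le[OF normal_imp_subgroup[OF N]], rule comm_in_normal_r[OF N])
       (use normal_sub[OF A] in auto)
qed

lemma LC_anti: "A \<lhd> G \<Longrightarrow> m \<le> n \<Longrightarrow> LC G A n \<subseteq> LC G A m"
proof (induction n)
  case 0 then show ?case by simp
next
  case (Suc n)
  show ?case
  proof (cases "m = Suc n")
    case True then show ?thesis by simp
  next
    case False
    then have "m \<le> n" using Suc.prems by simp
    then show ?thesis using Suc.IH Suc.prems LC_sub_Suc[of A n] by blast
  qed
qed

lemma comm_in_subgroup:
  assumes H: "subgroup A G" and a: "a \<in> A" and b: "b \<in> A"
  shows "a \<otimes> b \<otimes> inv a \<otimes> inv b \<in> A"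
proof -
  have "a \<otimes> b \<in> A" by (rule subgroup.m_closed[OF H a b])
  moreover have "inv a \<in> A" by (rule subgroup.m_inv_closed[OF H a])
  ultimately have "a \<otimes> b \<otimes> inv a \<in> A" by (rule subgroup.m_closed[OF H])
  moreover have "inv b \<in> A" by (rule subgroup.m_inv_closed[OF H b])
  ultimately show ?thesis by (rule subgroup.m_closed[OF H])
qed

lemma LC_subset: "subgroup A G \<Longrightarrow> LC G A n \<subseteq> A"
proof (induction n)
  case 0 then show ?case by simp
next
  case (Suc n)
  show ?case unfolding LC.simps
  proof (rule comm_subgroup_le[OF Suc.prems])
    fix x y assume "x \<in> A" "y \<in> LC G A n"
    then show "x \<otimes> y \<otimes> inv x \<otimes> inv y \<in> A" using Suc comm_in_subgroup by blast
  qed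
qed

lemma lower_central_restrict:
  assumes H: "subgroup A G"
  shows "lower_central (G\<lparr>carrier := A\<rparr>) n = LC G A n"
proof (induction n)
  case 0 then show ?case by simp
next
  case (Suc n)
  have sub: "LC G A n \<subseteq> A" using LC_subset H by blast
  have invc: "\<And>x. x \<in> A \<Longrightarrow> inv\<^bsub>G\<lparr>carrier := A\<rparr>\<^esub> x = inv x" by (rule m_inv_consistent[OF H])
  have eq: "{a \<otimes>\<^bsub>G\<lparr>carrier := A\<rparr>\<^esub> b \<otimes>\<^bsub>G\<lparr>carrier := A\<rparr>\<^esub> inv\<^bsub>G\<lparr>carrier := A\<rparr>\<^esub> a
       \<otimes>\<^bsub>G\<lparr>carrier := A\<rparr>\<^esub> inv\<^bsub>G\<lparr>carrier := A\<rparr>\<^esub> b |a b. a \<in> carrier (G\<lparr>carrier := A\<rparr>) \<and> b \<in> LC G A n}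
     = {a \<otimes> b \<otimes> inv a \<otimes> inv b |a b. a \<in> A \<and> b \<in> LC G A n}" (is "?L = ?R")
  proof (rule equalityI; rule subsetI)
    fix x assume "x \<in> ?L"
    then obtain a b where ab: "x = a \<otimes> b \<otimes> inv\<^bsub>G\<lparr>carrier := A\<rparr>\<^esub> a \<otimes> inv\<^bsub>G\<lparr>carrier := A\<rparr>\<^esub> b"
      "a \<in> A" "b \<in> LC G A n" by auto
    have "b \<in> A" using ab sub by blast
    then have "x = a \<otimes> b \<otimes> inv a \<otimes> inv b" using ab invc by simp
    then show "x \<in> ?R" using ab by blast
  next
    fix x assume "x \<in> ?R"
    then obtain a b where ab: "x = a \<otimes> b \<otimes> inv a \<otimes> inv b"
      "a \<in> A" "b \<in> LC G A n" by auto
    have "b \<in> A" using ab sub by blast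
    then have "x = a \<otimes>\<^bsub>G\<lparr>carrier := A\<rparr>\<^esub> b \<otimes>\<^bsub>G\<lparr>carrier := A\<rparr>\<^esub> inv\<^bsub>G\<lparr>carrier := A\<rparr>\<^esub> a \<otimes>\<^bsub>G\<lparr>carrier := A\<rparr>\<^esub> inv\<^bsub>G\<lparr>carrier := A\<rparr>\<^esub> b" using ab invc by simp
    then show "x \<in> ?L" using ab by auto
  qed
  have sub2: "?R \<subseteq> A"
    using sub comm_in_subgroup[OF H] by blast
  show ?case
    unfolding lower_central.simps LC.simps Suc comm_subgroup_def eq generate_consistent[OF sub2 H] ..
qed

end


context group begin

lemma normal_set_mult:
  assumes A: "A \<lhd> G" and B: "B \<lhd> G"
  shows "A <#> B \<lhd> G"
proof (rule normal_invI)
  interpret second_isomorphism_grp A G B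
    using A B by (simp add: second_isomorphism_grp_def second_isomorphism_grp_axioms_def normal_imp_subgroup)
  show "subgroup (A <#> B) G" by (rule normal_set_mult_subgroup)
  fix x h assume x: "x \<in> carrier G" and h: "h \<in> A <#> B"
  then obtain a b where ab: "a \<in> A" "b \<in> B" "h = a \<otimes> b" unfolding set_mult_def by blast
  have ac: "a \<in> carrier G" by (rule subgroup.mem_carrier[OF normal_imp_subgroup[OF A] ab(1)])
  have bc: "b \<in> carrier G" by (rule subgroup.mem_carrier[OF normal_imp_subgroup[OF B] ab(2)])
  have "x \<otimes> h \<otimes> inv x = (x \<otimes> a \<otimes> inv x) \<otimes> (x \<otimes> b \<otimes> inv x)"
    using x ac bc ab(3) by (simp add: m_assoc inv_cancel_l')
  moreover have "x \<otimes> a \<otimes> inv x \<in> A" by (rule normal_conj[OF A ab(1) x])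
  moreover have "x \<otimes> b \<otimes> inv x \<in> B" by (rule normal_conj[OF B ab(2) x])
  ultimately show "x \<otimes> h \<otimes> inv x \<in> A <#> B" unfolding set_mult_def by blast
qed

lemma LC'_normal: "A \<lhd> G \<Longrightarrow> LC' G A p \<lhd> G"
  unfolding LC'_def using normal_self LC_normal by simp

lemma LC'_step:
  assumes A: "A \<lhd> G" and a: "a \<in> A" and y: "y \<in> LC' G A p"
  shows "a \<otimes> y \<otimes> inv a \<otimes> inv y \<in> LC' G A (Suc p)"
proof (cases p)
  case 0
  then have "y \<in> carrier G" using y by (simp add: LC'_def)
  then show ?thesis using comm_in_normal_l[OF A \<open>y \<in> carrier G\<close> a] 0 by (simp add: LC'_def)
next
  case (Suc q)
  then have "y \<in> LC G A q" using y by (simp add: LC'_def)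
  then show ?thesis using comm_subgroup_incl[OF a] Suc by (simp add: LC'_def)
qed

definition UU :: "'a set \<Rightarrow> 'a set \<Rightarrow> nat \<Rightarrow> 'a set" where
  "UU A B n = {x. \<exists>p q. p + q = Suc n \<and> x \<in> LC' G A p \<and> x \<in> LC' G B q}"

lemma UU_carrier: assumes A: "A \<lhd> G" shows "UU A B n \<subseteq> carrier G"
  unfolding UU_def using normal_sub[OF LC'_normal[OF A]] by blast

lemma UU_gen_normal:
  assumes A: "A \<lhd> G" and B: "B \<lhd> G"
  shows "generate G (UU A B n) \<lhd> G"
proof (rule normal_generateI[OF UU_carrier[OF A]])
  fix h g assume h: "h \<in> UU A B n" and g: "g \<in> carrier G"
  then obtain p q where pq: "p + q = Suc n" "h \<in> LC' G A p" "h \<in> LC' G B q" unfolding UU_def by blast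
  have "g \<otimes> h \<otimes> inv g \<in> LC' G A p" by (rule normal_conj[OF LC'_normal[OF A] pq(2) g])
  moreover have "g \<otimes> h \<otimes> inv g \<in> LC' G B q" by (rule normal_conj[OF LC'_normal[OF B] pq(3) g])
  ultimately show "g \<otimes> h \<otimes> inv g \<in> UU A B n" unfolding UU_def using pq(1) by blast
qed

lemma LC_prod:
  assumes A: "A \<lhd> G" and B: "B \<lhd> G"
  shows "LC G (A <#> B) n \<subseteq> generate G (UU A B n)"
proof (induction n)
  case 0
  show ?case
  proof
    fix x assume "x \<in> LC G (A <#> B) 0"
    then obtain a b where ab: "a \<in> A" "b \<in> B" "x = a \<otimes> b" unfolding set_mult_def by auto
    have "a \<in> LC' G A 1" "a \<in> LC' G B 0" using ab normal_sub[OF A] by (auto simp: LC'_def)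
    hence "a \<in> UU A B 0" unfolding UU_def by force
    moreover have "b \<in> LC' G A 0" "b \<in> LC' G B 1" using ab normal_sub[OF B] by (auto simp: LC'_def)
    hence "b \<in> UU A B 0" unfolding UU_def by force
    ultimately show "x \<in> generate G (UU A B 0)" using ab(3) by (simp add: generate.eng generate.incl)
  qed
next
  case (Suc n)
  let ?D = "generate G (UU A B (Suc n))"
  have DN: "?D \<lhd> G" by (rule UU_gen_normal[OF A B])
  have ABc: "A <#> B \<subseteq> carrier G" by (rule normal_sub[OF normal_set_mult[OF A B]])
  have key: "x \<otimes> s \<otimes> inv x \<otimes> inv s \<in> ?D" if x: "x \<in> A <#> B" and s: "s \<in> UU A B n" for x s
  proof -
    obtain a b where ab: "a \<in> A" "b \<in> B" "x = a \<otimes> b" using x unfolding set_mult_def by auto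
    obtain p q where pq: "p + q = Suc n" "s \<in> LC' G A p" "s \<in> LC' G B q" using s unfolding UU_def by blast
    have ac: "a \<in> carrier G" using ab normal_sub[OF A] by blast
    have bc: "b \<in> carrier G" using ab normal_sub[OF B] by blast
    have sc: "s \<in> carrier G" using s UU_carrier[OF A] by blast
    have "b \<otimes> s \<otimes> inv b \<otimes> inv s \<in> LC' G A p" by (rule comm_in_normal_r[OF LC'_normal[OF A] bc pq(2)])
    moreover have "b \<otimes> s \<otimes> inv b \<otimes> inv s \<in> LC' G B (Suc q)" by (rule LC'_step[OF B ab(2) pq(3)])
    ultimately have "b \<otimes> s \<otimes> inv b \<otimes> inv s \<in> UU A B (Suc n)" unfolding UU_def using pq(1)
      by (intro CollectI exI[of _ p] exI[of _ "Suc q"]) simp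
    hence 1: "a \<otimes> (b \<otimes> s \<otimes> inv b \<otimes> inv s) \<otimes> inv a \<in> ?D"
      by (rule normal_conj[OF DN generate.incl ac])
    have "a \<otimes> s \<otimes> inv a \<otimes> inv s \<in> LC' G B q" by (rule comm_in_normal_r[OF LC'_normal[OF B] ac pq(3)])
    moreover have "a \<otimes> s \<otimes> inv a \<otimes> inv s \<in> LC' G A (Suc p)" by (rule LC'_step[OF A ab(1) pq(2)])
    ultimately have "a \<otimes> s \<otimes> inv a \<otimes> inv s \<in> UU A B (Suc n)" unfolding UU_def using pq(1)
      by (intro CollectI exI[of _ "Suc p"] exI[of _ q]) simp
    hence 2: "a \<otimes> s \<otimes> inv a \<otimes> inv s \<in> ?D" by (rule generate.incl)
    have "(a \<otimes> b) \<otimes> s \<otimes> inv (a \<otimes> b) \<otimes> inv s \<in> ?D"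
      unfolding comm_mult_left_id[OF ac bc sc] by (rule generate.eng[OF 1 2])
    then show ?thesis using ab(3) by simp
  qed
  show ?case unfolding LC.simps
  proof (rule comm_subgroup_le[OF normal_imp_subgroup[OF DN]])
    fix x y assume x: "x \<in> A <#> B" and y: "y \<in> LC G (A <#> B) n"
    have yg: "y \<in> generate G (UU A B n)" using y Suc by blast
    note cg = comm_generate[OF DN UU_carrier[OF A, of B n] ABc]
    show "x \<otimes> y \<otimes> inv x \<otimes> inv y \<in> ?D"
      using key x yg by (rule cg)
  qed
qed

lemma nilpotent_LC:
  assumes "subgroup A G" "nilpotent (G\<lparr>carrier := A\<rparr>)"
  shows "\<exists>c. LC G A c = {\<one>}"
  using assms lower_central_restrict[OF assms(1)] unfolding nilpotent_def by auto

lemma nilpotent_prod: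
  assumes A: "A \<lhd> G" and B: "B \<lhd> G"
    and nA: "nilpotent (G\<lparr>carrier := A\<rparr>)" and nB: "nilpotent (G\<lparr>carrier := B\<rparr>)"
  shows "nilpotent (G\<lparr>carrier := A <#> B\<rparr>)"
proof -
  obtain c where c: "LC G A c = {\<one>}" using nilpotent_LC[OF normal_imp_subgroup[OF A] nA] by blast
  obtain d where d: "LC G B d = {\<one>}" using nilpotent_LC[OF normal_imp_subgroup[OF B] nB] by blast
  have AB: "A <#> B \<lhd> G" by (rule normal_set_mult[OF A B])
  have U1: "UU A B (c + d + 1) \<subseteq> {\<one>}"
  proof
    fix x assume "x \<in> UU A B (c + d + 1)"
    then obtain p q where pq: "p + q = Suc (c + d + 1)" "x \<in> LC' G A p" "x \<in> LC' G B q" unfolding UU_def by blast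
    show "x \<in> {\<one>}"
    proof (cases "p \<ge> Suc c")
      case True
      then have "x \<in> LC G A (p - 1)" using pq by (simp add: LC'_def)
      moreover have "LC G A (p - 1) \<subseteq> LC G A c" using True LC_anti[OF A] by simp
      ultimately show ?thesis using c by blast
    next
      case False
      then have "q \<ge> Suc d" using pq(1) by simp
      then have "x \<in> LC G B (q - 1)" using pq by (simp add: LC'_def)
      moreover have "LC G B (q - 1) \<subseteq> LC G B d" using \<open>q \<ge> Suc d\<close> LC_anti[OF B] by simp
      ultimately show ?thesis using d by blast
    qed
  qed
  have "generate G (UU A B (c + d + 1)) \<subseteq> {\<one>}"
    by (rule generate_subgroup_incl[OF U1 triv_subgroup])
  hence "LC G (A <#> B) (c + d + 1) \<subseteq> {\<one>}" using LC_prod[OF A B] by blast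
  moreover have "\<one> \<in> LC G (A <#> B) (c + d + 1)"
    by (rule subgroup.one_closed[OF normal_imp_subgroup[OF LC_normal[OF AB]]])
  ultimately have "LC G (A <#> B) (c + d + 1) = {\<one>}" by blast
  hence "lower_central (G\<lparr>carrier := A <#> B\<rparr>) (c + d + 1) = {\<one>\<^bsub>G\<lparr>carrier := A <#> B\<rparr>\<^esub>}"
    unfolding lower_central_restrict[OF normal_imp_subgroup[OF AB]] by simp
  moreover have "group (G\<lparr>carrier := A <#> B\<rparr>)"
    by (rule subgroup.subgroup_is_group[OF normal_imp_subgroup[OF AB] is_group])
  ultimately show ?thesis unfolding nilpotent_def by blast
qed

lemma nilpotent_triv: "nilpotent (G\<lparr>carrier := {\<one>}\<rparr>)"
proof -
  have "group (G\<lparr>carrier := {\<one>}\<rparr>)" by (rule subgroup.subgroup_is_group[OF triv_subgroup is_group])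
  moreover have "lower_central (G\<lparr>carrier := {\<one>}\<rparr>) 0 = {\<one>\<^bsub>G\<lparr>carrier := {\<one>}\<rparr>\<^esub>}" by simp
  ultimately show ?thesis unfolding nilpotent_def by blast
qed

lemma Fitting_props:
  assumes fin: "finite (carrier G)"
  shows "Fitting G \<lhd> G \<and> nilpotent (G\<lparr>carrier := Fitting G\<rparr>)"
proof -
  define S where "S = {N. N \<lhd> G \<and> nilpotent (G\<lparr>carrier := N\<rparr>)}"
  have S1: "{\<one>} \<in> S" unfolding S_def using one_is_normal nilpotent_triv by blast
  have Sfin: "finite S"
  proof (rule finite_subset[of S "Pow (carrier G)"])
    show "S \<subseteq> Pow (carrier G)" unfolding S_def using normal_sub by blast
    show "finite (Pow (carrier G))" using fin by simp
  qed
  define m where "m = Max (card ` S)"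
  have "m \<in> card ` S" unfolding m_def using Sfin S1 by (intro Max_in) auto
  then obtain N where N: "N \<in> S" "card N = m" by blast
  have maxN: "card M \<le> card N" if "M \<in> S" for M
    using that N(2) Sfin unfolding m_def by simp
  have big: "M \<subseteq> N" if M: "M \<in> S" for M
  proof -
    have Mn: "M \<lhd> G" "nilpotent (G\<lparr>carrier := M\<rparr>)" using M unfolding S_def by auto
    have Nn: "N \<lhd> G" "nilpotent (G\<lparr>carrier := N\<rparr>)" using N unfolding S_def by auto
    have MN: "M <#> N \<in> S" unfolding S_def
      using normal_set_mult[OF Mn(1) Nn(1)] nilpotent_prod[OF Mn(1) Nn(1) Mn(2) Nn(2)] by blast
    have one: "\<one> \<in> M" "\<one> \<in> N" using Mn Nn normal_imp_subgroup subgroup.one_closed by blast+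
    have "N \<subseteq> M <#> N"
    proof
      fix x assume "x \<in> N"
      moreover have "x \<in> carrier G" using \<open>x \<in> N\<close> normal_sub[OF Nn(1)] by blast
      ultimately show "x \<in> M <#> N" using one unfolding set_mult_def by force
    qed
    moreover have "M \<subseteq> M <#> N"
    proof
      fix x assume "x \<in> M"
      moreover have "x \<in> carrier G" using \<open>x \<in> M\<close> normal_sub[OF Mn(1)] by blast
      ultimately show "x \<in> M <#> N" using one unfolding set_mult_def by force
    qed
    moreover have "finite (M <#> N)" using normal_sub[OF normal_set_mult[OF Mn(1) Nn(1)]] fin finite_subset by blast
    moreover have "card (M <#> N) \<le> card N" using maxN[OF MN] .
    ultimately have "N = M <#> N" using card_seteq by blast
    then show ?thesis using \<open>M \<subseteq> M <#> N\<close> by simp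
  qed
  have "Fitting G = N"
    unfolding Fitting_def
  proof (rule the_equality)
    show "N \<lhd> G \<and> nilpotent (G\<lparr>carrier := N\<rparr>) \<and> (\<forall>M. M \<lhd> G \<and> nilpotent (G\<lparr>carrier := M\<rparr>) \<longrightarrow> M \<subseteq> N)"
      using N(1) big unfolding S_def by blast
    fix Z assume Z: "Z \<lhd> G \<and> nilpotent (G\<lparr>carrier := Z\<rparr>) \<and> (\<forall>M. M \<lhd> G \<and> nilpotent (G\<lparr>carrier := M\<rparr>) \<longrightarrow> M \<subseteq> Z)"
    then have "Z \<subseteq> N" using big unfolding S_def by blast
    moreover have "N \<subseteq> Z" using Z N(1) unfolding S_def by blast
    ultimately show "Z = N" by blast
  qed
  then show ?thesis using N(1) unfolding S_def by blast
qed

end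


context comm_monoid begin
lemma finprod_pow:
  assumes f: "f \<in> A \<rightarrow> carrier G"
  shows "(finprod G f A) [^] (n::nat) = finprod G (\<lambda>a. f a [^] n) A"
proof (induction n)
  case 0 then show ?case by simp
next
  case (Suc n)
  have "(finprod G f A) [^] Suc n = finprod G (\<lambda>a. f a [^] n) A \<otimes> finprod G f A"
    using Suc by simp
  also have "\<dots> = finprod G (\<lambda>a. f a [^] n \<otimes> f a) A"
    using f by (subst finprod_multf) auto
  finally show ?case by simp
qed
end

context comm_group begin

lemma dprod_sqfree:
  assumes I: "finite I" "\<forall>p\<in>I. Factorial_Ring.prime (p::nat)" and ex: "\<forall>y\<in>carrier G. y [^] (\<Prod>I) = \<one>"
  shows "dprod_elem_abelian G"
proof -
  define k where "k = \<Prod>I"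
  define r where "r p = \<Prod>(I - {p})" for p
  have kr: "k = p * r p" if "p \<in> I" for p
    unfolding k_def r_def using prod.remove[OF I(1) that, of "\<lambda>x. x"] by simp
  have rnz: "r p \<noteq> 0" for p unfolding r_def using I by (auto simp: prime_gt_0_nat)
  have cop: "coprime (r p) p" if "p \<in> I" for p
    unfolding r_def using I that by (intro prod_coprime_left primes_coprime) auto
  have "\<forall>p\<in>I. \<exists>x y. r p * x = p * y + 1"
  proof
    fix p assume "p \<in> I"
    obtain x y where "r p * x = p * y + gcd (r p) p" using bezout_nat[OF rnz[of p]] by blast
    then show "\<exists>x y. r p * x = p * y + 1" using cop[OF \<open>p \<in> I\<close>] by auto
  qed
  then obtain xx yy where xy: "\<forall>p\<in>I. r p * xx p = p * yy p + 1" by metis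
  define e where "e p = r p * xx p" for p
  have e1: "e p = p * yy p + 1" if "p \<in> I" for p using xy that unfolding e_def by blast
  have ek: "e p * p = k * xx p" if "p \<in> I" for p using kr[OF that] unfolding e_def by simp
  have edvd: "q dvd e p" if "q \<in> I" "p \<in> I" "q \<noteq> p" for p q
    unfolding e_def r_def using that I(1) by (intro dvd_mult2 dvd_prodI) auto
  define H where "H p = {y \<in> carrier G. y [^] p = \<one>}" for p :: nat
  have Hsub: "subgroup (H p) G" for p
  proof (rule subgroupI)
    show "H p \<subseteq> carrier G" unfolding H_def by blast
    show "H p \<noteq> {}" unfolding H_def by force
    fix a assume "a \<in> H p" then show "inv a \<in> H p" unfolding H_def by (simp add: nat_pow_inv)
  next
    fix a b assume "a \<in> H p" "b \<in> H p"
    then show "a \<otimes> b \<in> H p" unfolding H_def by (simp add: pow_mult_distrib m_comm)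
  qed
  have a: "(y [^] e p) [^] p = \<one>" if "y \<in> carrier G" "p \<in> I" for y p
  proof -
    have "(y [^] e p) [^] p = y [^] (k * xx p)" using that ek nat_pow_pow by simp
    also have "\<dots> = (y [^] k) [^] xx p" using that nat_pow_pow by simp
    finally show ?thesis using ex that unfolding k_def by simp
  qed
  have b: "z [^] e p = \<one>" if zH: "z \<in> H q" and qpI: "q \<in> I" "p \<in> I" "q \<noteq> p" for z p q
  proof -
    obtain m where m: "e p = q * m" using edvd[OF qpI] by blast
    have zc: "z \<in> carrier G" using zH unfolding H_def by blast
    have "z [^] e p = (z [^] q) [^] m" using m nat_pow_pow[OF zc] by simp
    then show ?thesis using zH unfolding H_def by simp
  qed
  have c: "z [^] e p = z" if "z \<in> H p" "p \<in> I" for z p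
  proof -
    have zc: "z \<in> carrier G" using that unfolding H_def by blast
    have "z [^] e p = z [^] (p * yy p) \<otimes> z" using e1[OF that(2)] zc by simp
    also have "\<dots> = (z [^] p) [^] yy p \<otimes> z" using zc nat_pow_pow by simp
    finally show ?thesis using that zc unfolding H_def by simp
  qed
  define P where "P = product_group I (\<lambda>p. G\<lparr>carrier := H p\<rparr>)"
  define \<psi> where "\<psi> y = (\<lambda>p\<in>I. y [^] e p)" for y
  have \<psi>c: "\<psi> y \<in> carrier P" if "y \<in> carrier G" for y
    unfolding P_def \<psi>_def using that a unfolding H_def by auto
  have hom: "\<psi> \<in> hom G P"
  proof (rule homI)
    fix x assume "x \<in> carrier G" then show "\<psi> x \<in> carrier P" by (rule \<psi>c)
  next
    fix x y assume xy: "x \<in> carrier G" "y \<in> carrier G"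
    show "\<psi> (x \<otimes> y) = \<psi> x \<otimes>\<^bsub>P\<^esub> \<psi> y"
      unfolding P_def \<psi>_def using xy by (auto simp: pow_mult_distrib m_comm)
  qed
  have inj: "inj_on \<psi> (carrier G)"
  proof (rule inj_onI)
    fix x y assume xc: "x \<in> carrier G" and yc: "y \<in> carrier G" and eq: "\<psi> x = \<psi> y"
    define z where "z = x \<otimes> inv y"
    have zc: "z \<in> carrier G" unfolding z_def using xc yc by simp
    have ze: "z [^] e p = \<one>" if "p \<in> I" for p
    proof -
      have "x [^] e p = y [^] e p" using eq that unfolding \<psi>_def by (metis restrict_apply')
      then show ?thesis unfolding z_def using xc yc
        by (simp add: pow_mult_distrib m_comm nat_pow_inv)
    qed
    have "ord z = 1"
    proof (rule ccontr)
      assume "ord z \<noteq> 1"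
      then obtain q where q: "Factorial_Ring.prime q" "q dvd ord z" using prime_factor_nat by blast
      have "ord z dvd k" using ex zc pow_eq_id[OF zc] unfolding k_def by blast
      then have "q dvd \<Prod>I" using q unfolding k_def by (meson dvd_trans)
      then obtain p where p: "p \<in> I" "q dvd p" using prime_dvd_prod_iff[OF I(1) q(1)] by auto
      then have "q = p" using I q primes_dvd_imp_eq by blast
      have "ord z dvd e q" using ze[OF p(1)] pow_eq_id[OF zc] \<open>q = p\<close> by blast
      then have "q dvd e q" using q dvd_trans by blast
      then have "q dvd q * yy q + 1" using e1[OF p(1)] \<open>q = p\<close> by simp
      then have "q dvd 1" using dvd_add_right_iff[of q "q * yy q" 1] by simp
      then show False using q by simp
    qed
    then have "z = \<one>" using pow_eq_id[OF zc, of 1] zc by simp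
    then show "x = y" unfolding z_def using inv_solve_right'[of \<one> x y] xc yc by simp
  qed
  have surj: "\<psi> ` carrier G = carrier P"
  proof
    show "\<psi> ` carrier G \<subseteq> carrier P" using \<psi>c by blast
  next
    show "carrier P \<subseteq> \<psi> ` carrier G"
    proof
      fix h assume h: "h \<in> carrier P"
      then have hH: "\<And>p. p \<in> I \<Longrightarrow> h p \<in> H p" and hext: "\<And>p. p \<notin> I \<Longrightarrow> h p = undefined"
        unfolding P_def by (auto simp: PiE_def extensional_def)
      have hc: "h \<in> I \<rightarrow> carrier G" using hH unfolding H_def by blast
      define y where "y = finprod G h I"
      have yc: "y \<in> carrier G" unfolding y_def using hc by simp
      have "\<psi> y = h"
      proof
        fix p show "\<psi> y p = h p"
        proof (cases "p \<in> I")
          case True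
          have "y [^] e p = finprod G (\<lambda>q. h q [^] e p) I" unfolding y_def by (rule finprod_pow[OF hc])
          also have "\<dots> = finprod G (\<lambda>q. if p = q then h q else \<one>) I"
          proof (rule finprod_cong')
            show "(\<lambda>q. if p = q then h q else \<one>) \<in> I \<rightarrow> carrier G" using hc by auto
            fix q assume "q \<in> I"
            show "h q [^] e p = (if p = q then h q else \<one>)"
              using b[OF hH[OF \<open>q \<in> I\<close>] \<open>q \<in> I\<close> True] c[OF hH[OF True] True] by auto
          qed simp
          also have "\<dots> = h p" by (rule finprod_singleton[OF True I(1) hc])
          finally show ?thesis unfolding \<psi>_def using True by simp
        next
          case False then show ?thesis unfolding \<psi>_def using hext by simp
        qed
      qed
      then show "h \<in> \<psi> ` carrier G" using yc by blast
    qed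
  qed
  have iso: "G \<cong> P"
    by (rule is_isoI, rule isoI[OF hom]) (simp add: bij_betw_def inj surj)
  have ea: "elementary_abelian (G\<lparr>carrier := H p\<rparr>)" if "p \<in> I" for p
  proof -
    interpret Hg: group "G\<lparr>carrier := H p\<rparr>" by (rule subgroup.subgroup_is_group[OF Hsub is_group])
    have "comm_group (G\<lparr>carrier := H p\<rparr>)"
      by (rule Hg.group_comm_groupI) (simp add: H_def m_comm)
    moreover have "\<forall>x\<in>carrier (G\<lparr>carrier := H p\<rparr>). x [^]\<^bsub>G\<lparr>carrier := H p\<rparr>\<^esub> p = \<one>\<^bsub>G\<lparr>carrier := H p\<rparr>\<^esub>"
      unfolding H_def by (simp add: nat_pow_consistent[symmetric])
    ultimately show ?thesis unfolding elementary_abelian_def using I that by blast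
  qed
  show ?thesis unfolding dprod_elem_abelian_def
    using I(1) Hsub ea iso unfolding P_def by blast
qed

end

lemma product_group_pow:
  assumes "\<And>i. i \<in> I \<Longrightarrow> group (G i)" and f: "f \<in> carrier (product_group I G)"
  shows "f [^]\<^bsub>product_group I G\<^esub> (n::nat) = (\<lambda>i\<in>I. f i [^]\<^bsub>G i\<^esub> n)"
proof (induction n)
  case 0 then show ?case by simp
next
  case (Suc n)
  then show ?case by (simp add: restrict_def fun_eq_iff)
qed

context group begin

lemma subgroup_pow_closed: "subgroup H G \<Longrightarrow> x \<in> H \<Longrightarrow> x [^] (n::nat) \<in> H"
  by (induction n) (auto intro: subgroup.m_closed subgroup.one_closed)

lemma dprod_exp:
  assumes D: "dprod_elem_abelian G" and ordn: "order G dvd n" and n: "n > 0" and y: "y \<in> carrier G"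
  shows "y [^] (\<Prod>(prime_factors n)) = \<one>"
proof -
  define k where "k = \<Prod>(prime_factors n)"
  obtain I :: "nat set" and H where I: "finite I" and HI: "\<forall>i \<in> I. subgroup (H i) G \<and> elementary_abelian (G\<lparr>carrier := H i\<rparr>)"
    and iso: "G \<cong> product_group I (\<lambda>i. G\<lparr>carrier := H i\<rparr>)"
    using D unfolding dprod_elem_abelian_def by blast
  let ?P = "product_group I (\<lambda>i. G\<lparr>carrier := H i\<rparr>)"
  obtain \<phi> where \<phi>: "\<phi> \<in> iso G ?P" using iso unfolding is_iso_def by blast
  have grp: "group (G\<lparr>carrier := H i\<rparr>)" if "i \<in> I" for i
  proof -
    have "subgroup (H i) G" using HI that by blast
    then show ?thesis by (rule subgroup.subgroup_is_group[OF _ is_group])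
  qed
  have Pg: "group ?P" using grp by simp
  have zk: "z [^] k = \<one>" if iI: "i \<in> I" and zH: "z \<in> H i" for i z
  proof -
    have "subgroup (H i) G" using HI iI by blast
    then have zc: "z \<in> carrier G" using zH by (rule subgroup.mem_carrier)
    obtain p :: nat where p: "Factorial_Ring.prime p" "\<forall>x \<in> H i. x [^]\<^bsub>G\<lparr>carrier := H i\<rparr>\<^esub> p = \<one>\<^bsub>G\<lparr>carrier := H i\<rparr>\<^esub>"
      using HI iI unfolding elementary_abelian_def by auto
    have "z [^] p = \<one>" using p(2) zH by (simp add: nat_pow_consistent[symmetric])
    then have "ord z dvd p" using pow_eq_id[OF zc] by simp
    then have "ord z = 1 \<or> ord z = p" using p(1) by (auto simp: prime_nat_iff)
    then show ?thesis
    proof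
      assume "ord z = 1"
      then show ?thesis using pow_eq_id[OF zc] by simp
    next
      assume "ord z = p"
      have "ord z dvd order G" by (rule ord_dvd_group_order[OF zc])
      then have "p dvd n" using \<open>ord z = p\<close> dvd_trans[OF _ ordn] by simp
      then have "p \<in> prime_factors n" using p(1) n by (auto simp: prime_factors_dvd)
      then have "p dvd k" unfolding k_def by (intro dvd_prodI) auto
      then show ?thesis using pow_eq_id[OF zc] \<open>ord z = p\<close> by simp
    qed
  qed
  have hom: "\<phi> \<in> hom G ?P" and inj: "inj_on \<phi> (carrier G)" using \<phi> unfolding iso_def bij_betw_def by auto
  have \<phi>y: "\<phi> y \<in> carrier ?P" using hom y unfolding hom_def by auto
  have "\<phi> (y [^] k) = (\<phi> y) [^]\<^bsub>?P\<^esub> k" using hom_nat_pow[OF hom y is_group Pg] .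
  also have "\<dots> = (\<lambda>i\<in>I. (\<phi> y i) [^]\<^bsub>G\<lparr>carrier := H i\<rparr>\<^esub> k)"
    by (rule product_group_pow[OF grp \<phi>y])
  also have "\<dots> = (\<lambda>i\<in>I. \<one>\<^bsub>G\<lparr>carrier := H i\<rparr>\<^esub>)"
  proof (rule restrict_ext)
    fix i assume i: "i \<in> I"
    have "\<phi> y i \<in> H i" using \<phi>y i by (auto simp: PiE_def Pi_def)
    then show "(\<phi> y i) [^]\<^bsub>G\<lparr>carrier := H i\<rparr>\<^esub> k = \<one>\<^bsub>G\<lparr>carrier := H i\<rparr>\<^esub>"
      using zk[OF i] by (simp add: nat_pow_consistent[symmetric])
  qed
  also have "\<dots> = \<phi> \<one>" using hom_one[OF hom is_group Pg] by simp
  finally have "\<phi> (y [^] k) = \<phi> \<one>" .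
  then show ?thesis using inj y unfolding k_def inj_on_def by simp
qed

end


context group begin

lemma conj_pow:
  assumes g: "g \<in> carrier G" and x: "x \<in> carrier G"
  shows "g \<otimes> x [^] (n::nat) \<otimes> inv g = (g \<otimes> x \<otimes> inv g) [^] n"
proof (induction n)
  case 0 then show ?case using g by simp
next
  case (Suc n)
  have "(g \<otimes> x \<otimes> inv g) [^] Suc n = (g \<otimes> x [^] n \<otimes> inv g) \<otimes> (g \<otimes> x \<otimes> inv g)"
    using Suc by simp
  also have "\<dots> = g \<otimes> x [^] Suc n \<otimes> inv g" using g x by (simp add: m_assoc inv_cancel_l')
  finally show ?case by simp
qed

lemma Fstep_main:
  assumes fin: "finite (carrier G)" and V: "V \<lhd> G\<lparr>carrier := Fitting G\<rparr>"
  defines "k \<equiv> core (card (Fitting G))"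
  defines "W \<equiv> comm_subgroup G (Fitting G) V <#> generate G {x [^] k | x. x \<in> V}"
  shows "Fstep_ok G V W \<and> (\<forall>M. Fstep_ok G V M \<longrightarrow> W \<subseteq> M)"
proof -
  define F where "F = Fitting G"
  have FN: "F \<lhd> G" using Fitting_props[OF fin] unfolding F_def by blast
  have FS: "subgroup F G" by (rule normal_imp_subgroup[OF FN])
  interpret HF: group "G\<lparr>carrier := F\<rparr>" by (rule subgroup.subgroup_is_group[OF FS is_group])
  have VN: "V \<lhd> G\<lparr>carrier := F\<rparr>" using V unfolding F_def .
  have VF: "subgroup V (G\<lparr>carrier := F\<rparr>)" by (rule normal_imp_subgroup[OF VN])
  have VG: "subgroup V G" by (rule incl_subgroup[OF FS VF])
  have VsF: "V \<subseteq> F" using subgroup.subset[OF VF] by simp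
  have Fc: "F \<subseteq> carrier G" by (rule subgroup.subset[OF FS])
  have invF: "\<And>x. x \<in> F \<Longrightarrow> inv\<^bsub>G\<lparr>carrier := F\<rparr>\<^esub> x = inv x" by (rule m_inv_consistent[OF FS])
  have Fconj: "g \<otimes> a \<otimes> inv g \<in> F" if "g \<in> F" "a \<in> F" for g a
    using that FS by (intro subgroup.m_closed subgroup.m_inv_closed) auto
  have Vconj: "g \<otimes> v \<otimes> inv g \<in> V" if g: "g \<in> F" and v: "v \<in> V" for g v
  proof -
    have "g \<otimes>\<^bsub>G\<lparr>carrier := F\<rparr>\<^esub> v \<otimes>\<^bsub>G\<lparr>carrier := F\<rparr>\<^esub> inv\<^bsub>G\<lparr>carrier := F\<rparr>\<^esub> g \<in> V"
      by (rule HF.normal_conj[OF VN v]) (simp add: g)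
    then show ?thesis using invF[OF g] by simp
  qed
  have Vcomm: "a \<otimes> b \<otimes> inv a \<otimes> inv b \<in> V" if a: "a \<in> F" and b: "b \<in> V" for a b
  proof -
    have bF: "b \<in> F" using b VsF by blast
    have "a \<otimes>\<^bsub>G\<lparr>carrier := F\<rparr>\<^esub> b \<otimes>\<^bsub>G\<lparr>carrier := F\<rparr>\<^esub> inv\<^bsub>G\<lparr>carrier := F\<rparr>\<^esub> a \<otimes>\<^bsub>G\<lparr>carrier := F\<rparr>\<^esub> inv\<^bsub>G\<lparr>carrier := F\<rparr>\<^esub> b \<in> V"
      by (rule HF.comm_in_normal_r[OF VN _ b]) (simp add: a)
    then show ?thesis using invF[OF a] invF[OF bF] by simp
  qed
  define S1 where "S1 = {a \<otimes> b \<otimes> inv a \<otimes> inv b |a b. a \<in> F \<and> b \<in> V}"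
  define C where "C = comm_subgroup G F V"
  have C_def': "C = generate G S1" unfolding C_def S1_def comm_subgroup_def ..
  have S1F: "S1 \<subseteq> F"
  proof
    fix x assume "x \<in> S1"
    then obtain a b where ab: "x = a \<otimes> b \<otimes> inv a \<otimes> inv b" "a \<in> F" "b \<in> V" unfolding S1_def by blast
    have "b \<in> F" using ab VsF by blast
    then show "x \<in> F" using ab comm_in_subgroup[OF FS] by simp
  qed
  have CN: "C \<lhd> G\<lparr>carrier := F\<rparr>"
  proof -
    have "generate (G\<lparr>carrier := F\<rparr>) S1 \<lhd> G\<lparr>carrier := F\<rparr>"
    proof (rule HF.normal_generateI)
      show "S1 \<subseteq> carrier (G\<lparr>carrier := F\<rparr>)" using S1F by simp
      fix h g assume h: "h \<in> S1" and g: "g \<in> carrier (G\<lparr>carrier := F\<rparr>)"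
      have gF: "g \<in> F" using g by simp
      obtain a b where ab: "h = a \<otimes> b \<otimes> inv a \<otimes> inv b" "a \<in> F" "b \<in> V" using h unfolding S1_def by blast
      have ac: "a \<in> carrier G" "b \<in> carrier G" "g \<in> carrier G" using ab gF VsF Fc by auto
      have "g \<otimes> h \<otimes> inv g = (g \<otimes> a \<otimes> inv g) \<otimes> (g \<otimes> b \<otimes> inv g) \<otimes> inv (g \<otimes> a \<otimes> inv g) \<otimes> inv (g \<otimes> b \<otimes> inv g)"
        unfolding ab(1) by (rule conj_comm[OF ac(3) ac(1) ac(2)])
      moreover have "g \<otimes> a \<otimes> inv g \<in> F" by (rule Fconj[OF gF ab(2)])
      moreover have "g \<otimes> b \<otimes> inv g \<in> V" by (rule Vconj[OF gF ab(3)])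
      ultimately have "g \<otimes> h \<otimes> inv g \<in> S1" unfolding S1_def by blast
      then show "g \<otimes>\<^bsub>G\<lparr>carrier := F\<rparr>\<^esub> h \<otimes>\<^bsub>G\<lparr>carrier := F\<rparr>\<^esub> inv\<^bsub>G\<lparr>carrier := F\<rparr>\<^esub> g \<in> S1"
        using invF[OF gF] by simp
    qed
    then show ?thesis unfolding C_def' generate_consistent[OF S1F FS] .
  qed
  define S2 where "S2 = {x [^] k | x. x \<in> V}"
  define P where "P = generate G S2"
  have S2V: "S2 \<subseteq> V" unfolding S2_def using subgroup_pow_closed[OF VG] by blast
  have S2F: "S2 \<subseteq> F" using S2V VsF by blast
  have PN: "P \<lhd> G\<lparr>carrier := F\<rparr>"
  proof -
    have "generate (G\<lparr>carrier := F\<rparr>) S2 \<lhd> G\<lparr>carrier := F\<rparr>"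
    proof (rule HF.normal_generateI)
      show "S2 \<subseteq> carrier (G\<lparr>carrier := F\<rparr>)" using S2F by simp
      fix h g assume h: "h \<in> S2" and g: "g \<in> carrier (G\<lparr>carrier := F\<rparr>)"
      have gF: "g \<in> F" using g by simp
      obtain x where x: "h = x [^] k" "x \<in> V" using h unfolding S2_def by blast
      have xc: "x \<in> carrier G" "g \<in> carrier G" using x gF VsF Fc by auto
      have "g \<otimes> h \<otimes> inv g = (g \<otimes> x \<otimes> inv g) [^] k" unfolding x(1) by (rule conj_pow[OF xc(2) xc(1)])
      moreover have "g \<otimes> x \<otimes> inv g \<in> V" by (rule Vconj[OF gF x(2)])
      ultimately have "g \<otimes> h \<otimes> inv g \<in> S2" unfolding S2_def by blast
      then show "g \<otimes>\<^bsub>G\<lparr>carrier := F\<rparr>\<^esub> h \<otimes>\<^bsub>G\<lparr>carrier := F\<rparr>\<^esub> inv\<^bsub>G\<lparr>carrier := F\<rparr>\<^esub> g \<in> S2"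
        using invF[OF gF] by simp
    qed
    then show ?thesis unfolding P_def generate_consistent[OF S2F FS] .
  qed
  have W_eq: "W = C <#> P" unfolding W_def C_def P_def S2_def F_def ..
  have WN: "W \<lhd> G\<lparr>carrier := F\<rparr>"
    using HF.normal_set_mult[OF CN PN] unfolding W_eq by simp
  have CV: "C \<subseteq> V" unfolding C_def by (rule comm_subgroup_le[OF VG Vcomm])
  have PV: "P \<subseteq> V" unfolding P_def by (rule generate_subgroup_incl[OF S2V VG])
  have WV: "W \<subseteq> V"
  proof
    fix x assume "x \<in> W"
    then obtain c p where cp: "c \<in> C" "p \<in> P" "x = c \<otimes> p" unfolding W_eq set_mult_def by blast
    then show "x \<in> V" using CV PV subgroup.m_closed[OF VG] by blast
  qed
  have PG: "subgroup P G" unfolding P_def by (rule generate_is_subgroup) (use S2F Fc in blast)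
  have oneP: "\<one> \<in> P" by (rule subgroup.one_closed[OF PG])
  have CW: "C \<subseteq> W"
  proof
    fix c assume c: "c \<in> C"
    have "c \<in> carrier G" using c CV subgroup.subset[OF VG] by blast
    then have "c = c \<otimes> \<one>" by simp
    then show "c \<in> W" unfolding W_eq set_mult_def using c oneP by blast
  qed
  have PW: "P \<subseteq> W"
  proof
    fix c assume c: "c \<in> P"
    have "c \<in> carrier G" using c PV subgroup.subset[OF VG] by blast
    then have "c = \<one> \<otimes> c" by simp
    moreover have "\<one> \<in> C" unfolding C_def by (rule subgroup.one_closed[OF comm_subgroup_subgroup]) (use Fc VsF in auto)
    ultimately show "c \<in> W" unfolding W_eq set_mult_def using c by blast
  qed
  have Wcomm: "\<forall>f\<in>F. \<forall>x\<in>V. f \<otimes> x \<otimes> inv f \<otimes> inv x \<in> W"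
  proof (intro ballI)
    fix f x assume f: "f \<in> F" and x: "x \<in> V"
    have "f \<otimes> x \<otimes> inv f \<otimes> inv x \<in> C" unfolding C_def by (rule comm_subgroup_incl[OF f x])
    then show "f \<otimes> x \<otimes> inv f \<otimes> inv x \<in> W" using CW by blast
  qed
  interpret GV: group "G\<lparr>carrier := V\<rparr>" by (rule subgroup.subgroup_is_group[OF VG is_group])
  have invV: "\<And>x. x \<in> V \<Longrightarrow> inv\<^bsub>G\<lparr>carrier := V\<rparr>\<^esub> x = inv x" by (rule m_inv_consistent[OF VG])
  have WNV: "W \<lhd> G\<lparr>carrier := V\<rparr>"
    using HF.normal_restrict_supergroup[OF VF WN WV] by simp
  interpret WNV: normal W "G\<lparr>carrier := V\<rparr>" by (rule WNV)
  let ?Q = "G\<lparr>carrier := V\<rparr> Mod W"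
  have Qg: "group ?Q" by (rule WNV.factorgroup_is_group)
  have Qcar: "\<exists>x\<in>V. Xc0 = W #>\<^bsub>G\<lparr>carrier := V\<rparr>\<^esub> x" if "Xc0 \<in> carrier ?Q" for Xc0
  proof -
    have "Xc0 \<in> rcosets\<^bsub>G\<lparr>carrier := V\<rparr>\<^esub> W" using that by (simp add: FactGroup_def)
    then show ?thesis unfolding RCOSETS_def by simp
  qed
  have Qcomm: "comm_group ?Q"
  proof (rule group.group_comm_groupI[OF Qg])
    fix Xc0 Yc0 assume Xc0: "Xc0 \<in> carrier ?Q" and Yc0: "Yc0 \<in> carrier ?Q"
    obtain x where x: "x \<in> V" "Xc0 = W #>\<^bsub>G\<lparr>carrier := V\<rparr>\<^esub> x" using Qcar[OF Xc0] by blast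
    obtain y where y: "y \<in> V" "Yc0 = W #>\<^bsub>G\<lparr>carrier := V\<rparr>\<^esub> y" using Qcar[OF Yc0] by blast
    have xyc: "x \<in> carrier G" "y \<in> carrier G" using x y subgroup.subset[OF VG] by auto
    have xyV: "x \<otimes> y \<in> V" "y \<otimes> x \<in> V" using x y subgroup.m_closed[OF VG] by auto
    have xF: "x \<in> F" using x VsF by blast
    have "x \<otimes> y \<otimes> inv x \<otimes> inv y \<in> W" using Wcomm xF y(1) by blast
    moreover have "(x \<otimes> y) \<otimes> inv (y \<otimes> x) = x \<otimes> y \<otimes> inv x \<otimes> inv y"
      using xyc by (simp add: inv_mult_group m_assoc)
    ultimately have "(x \<otimes> y) \<otimes>\<^bsub>G\<lparr>carrier := V\<rparr>\<^esub> inv\<^bsub>G\<lparr>carrier := V\<rparr>\<^esub> (y \<otimes> x) \<in> W"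
      using invV[OF xyV(2)] by simp
    then have "x \<otimes> y \<in> W #>\<^bsub>G\<lparr>carrier := V\<rparr>\<^esub> (y \<otimes> x)"
      using WNV.rcos_module_rev[OF GV.is_group] xyV by simp
    then have eq: "W #>\<^bsub>G\<lparr>carrier := V\<rparr>\<^esub> (y \<otimes> x) = W #>\<^bsub>G\<lparr>carrier := V\<rparr>\<^esub> (x \<otimes> y)"
      using GV.repr_independence[OF _ _ WNV.subgroup_axioms] xyV by simp
    show "Xc0 \<otimes>\<^bsub>?Q\<^esub> Yc0 = Yc0 \<otimes>\<^bsub>?Q\<^esub> Xc0"
      using WNV.rcos_sum[of x y] WNV.rcos_sum[of y x] x y eq by simp
  qed
  have Qpow: "Xc0 [^]\<^bsub>?Q\<^esub> (\<Prod>(prime_factors (card F))) = \<one>\<^bsub>?Q\<^esub>" if Xc0: "Xc0 \<in> carrier ?Q" for Xc0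
  proof -
    obtain x where x: "x \<in> V" "Xc0 = W #>\<^bsub>G\<lparr>carrier := V\<rparr>\<^esub> x" using Qcar[OF Xc0] by blast
    have kk: "\<Prod>(prime_factors (card F)) = k" unfolding k_def core_def F_def ..
    have "Xc0 [^]\<^bsub>?Q\<^esub> k = W #>\<^bsub>G\<lparr>carrier := V\<rparr>\<^esub> (x [^]\<^bsub>G\<lparr>carrier := V\<rparr>\<^esub> k)"
      using WNV.FactGroup_pow[of x k] x by simp
    also have "\<dots> = W #>\<^bsub>G\<lparr>carrier := V\<rparr>\<^esub> (x [^] k)" by (simp add: nat_pow_consistent[symmetric])
    also have "\<dots> = W"
    proof (rule WNV.rcos_const[OF GV.is_group])
      have "x [^] k \<in> S2" unfolding S2_def using x by blast
      then show "x [^] k \<in> W" using PW unfolding P_def by (blast intro: generate.incl)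
    qed
    finally show ?thesis using kk by simp
  qed
  have Wdp: "dprod_elem_abelian ?Q"
    by (rule comm_group.dprod_sqfree[OF Qcomm]) (use Qpow in \<open>auto simp: in_prime_factors_imp_prime\<close>)
  have ok: "Fstep_ok G V W"
    unfolding Fstep_ok_def using WN WV Wcomm Wdp unfolding F_def by blast
  have minimal: "W \<subseteq> M" if M: "Fstep_ok G V M" for M
  proof -
    have MN: "M \<lhd> G\<lparr>carrier := F\<rparr>" and MV: "M \<subseteq> V"
      and Mcomm: "\<forall>f\<in>F. \<forall>x\<in>V. f \<otimes> x \<otimes> inv f \<otimes> inv x \<in> M"
      and Md: "dprod_elem_abelian (G\<lparr>carrier := V\<rparr> Mod M)"
      using M unfolding Fstep_ok_def F_def by auto
    have MG: "subgroup M G" by (rule incl_subgroup[OF FS normal_imp_subgroup[OF MN]])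
    have CM: "C \<subseteq> M" unfolding C_def by (rule comm_subgroup_le[OF MG]) (use Mcomm in blast)
    have MNV: "M \<lhd> G\<lparr>carrier := V\<rparr>"
      using HF.normal_restrict_supergroup[OF VF MN MV] by simp
    interpret MNV: normal M "G\<lparr>carrier := V\<rparr>" by (rule MNV)
    let ?Q = "G\<lparr>carrier := V\<rparr> Mod M"
    have Qg: "group ?Q" by (rule MNV.factorgroup_is_group)
    have finF: "finite F" using Fc fin finite_subset by blast
    have cardF: "card F > 0" using finF subgroup.one_closed[OF FS] card_gt_0_iff by blast
    have e1: "card (rcosets\<^bsub>G\<lparr>carrier := V\<rparr>\<^esub> M) * card M = card V"
      using GV.lagrange[OF MNV.subgroup_axioms] unfolding order_def by simp
    have e2: "card (rcosets\<^bsub>G\<lparr>carrier := F\<rparr>\<^esub> V) * card V = card F"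
      using HF.lagrange[OF VF] unfolding order_def by simp
    have d1: "card (rcosets\<^bsub>G\<lparr>carrier := V\<rparr>\<^esub> M) dvd card V"
      unfolding e1[symmetric] by (rule dvd_triv_left)
    have d2: "card V dvd card F"
      unfolding e2[symmetric] by (rule dvd_triv_right)
    have "card (rcosets\<^bsub>G\<lparr>carrier := V\<rparr>\<^esub> M) dvd card F"
      by (rule dvd_trans[OF d1 d2])
    then have ordQ: "order ?Q dvd card F" unfolding order_def FactGroup_def by simp
    have PM: "P \<subseteq> M" unfolding P_def
    proof (rule generate_subgroup_incl[OF _ MG])
      show "S2 \<subseteq> M"
      proof
        fix z assume "z \<in> S2"
        then obtain x where x: "z = x [^] k" "x \<in> V" unfolding S2_def by blast
        have xk: "x [^] k \<in> V" by (rule subgroup_pow_closed[OF VG x(2)])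
        have Xc: "M #>\<^bsub>G\<lparr>carrier := V\<rparr>\<^esub> x \<in> carrier ?Q"
          unfolding FactGroup_def using GV.rcosetsI[of M x] MV x(2) by simp
        have "(M #>\<^bsub>G\<lparr>carrier := V\<rparr>\<^esub> x) [^]\<^bsub>?Q\<^esub> k = \<one>\<^bsub>?Q\<^esub>"
          using group.dprod_exp[OF Qg Md ordQ cardF Xc] unfolding k_def core_def F_def .
        moreover have "(M #>\<^bsub>G\<lparr>carrier := V\<rparr>\<^esub> x) [^]\<^bsub>?Q\<^esub> k = M #>\<^bsub>G\<lparr>carrier := V\<rparr>\<^esub> (x [^] k)"
          using MNV.FactGroup_pow[of x k] x(2) by (simp add: nat_pow_consistent[symmetric])
        ultimately have "M #>\<^bsub>G\<lparr>carrier := V\<rparr>\<^esub> (x [^] k) = M" by simp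
        moreover have "x [^] k \<in> M #>\<^bsub>G\<lparr>carrier := V\<rparr>\<^esub> (x [^] k)"
          using GV.rcos_self[OF _ MNV.subgroup_axioms] xk by simp
        ultimately show "z \<in> M" using x(1) by simp
      qed
    qed
    show "W \<subseteq> M"
    proof
      fix x assume "x \<in> W"
      then obtain c p where cp: "c \<in> C" "p \<in> P" "x = c \<otimes> p" unfolding W_eq set_mult_def by blast
      then show "x \<in> M" using CM PM subgroup.m_closed[OF MG] by blast
    qed
  qed
  show ?thesis using ok minimal by blast
qed

end


context group begin

lemma Fcentral_Suc_eq:
  assumes fin: "finite (carrier G)" and V: "Fcentral G i \<lhd> G\<lparr>carrier := Fitting G\<rparr>"
  shows "Fcentral G (Suc i) = comm_subgroup G (Fitting G) (Fcentral G i) <#>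
    generate G {x [^] core (card (Fitting G)) | x. x \<in> Fcentral G i}"
    (is "_ = ?W")
proof -
  have main: "Fstep_ok G (Fcentral G i) ?W \<and> (\<forall>M. Fstep_ok G (Fcentral G i) M \<longrightarrow> ?W \<subseteq> M)"
    by (rule Fstep_main[OF fin V])
  show ?thesis unfolding Fcentral.simps
  proof (rule the_equality)
    show "Fstep_ok G (Fcentral G i) ?W \<and> (\<forall>M. Fstep_ok G (Fcentral G i) M \<longrightarrow> ?W \<subseteq> M)" by (rule main)
    fix N assume N: "Fstep_ok G (Fcentral G i) N \<and> (\<forall>M. Fstep_ok G (Fcentral G i) M \<longrightarrow> N \<subseteq> M)"
    then have "N \<subseteq> ?W" using main by blast
    moreover have "?W \<subseteq> N" using N main by blast
    ultimately show "N = ?W" by blast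
  qed
qed

lemma Fcentral_normal:
  assumes fin: "finite (carrier G)"
  shows "Fcentral G i \<lhd> G\<lparr>carrier := Fitting G\<rparr>"
proof (induction i)
  case 0
  have FS: "subgroup (Fitting G) G" using Fitting_props[OF fin] normal_imp_subgroup by blast
  have "group (G\<lparr>carrier := Fitting G\<rparr>)" by (rule subgroup.subgroup_is_group[OF FS is_group])
  then have "carrier (G\<lparr>carrier := Fitting G\<rparr>) \<lhd> G\<lparr>carrier := Fitting G\<rparr>" by (rule group.normal_self)
  then show ?case by simp
next
  case (Suc i)
  have "Fstep_ok G (Fcentral G i) (Fcentral G (Suc i))"
    using Fstep_main[OF fin Suc] Fcentral_Suc_eq[OF fin Suc] by simp
  then show ?case unfolding Fstep_ok_def by blast
qed

end

theorem lemma2p1: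
  fixes G :: "('a, 'b) monoid_scheme" and i :: nat
  assumes "group G" and "finite (carrier G)"
  defines "k \<equiv> core (card (Fitting G))"
  shows "Fcentral G (Suc i) =
    comm_subgroup G (Fitting G) (Fcentral G i) <#>\<^bsub>G\<^esub>
    generate G {x [^]\<^bsub>G\<^esub> k | x. x \<in> Fcentral G i}"
  unfolding k_def
  using group.Fcentral_Suc_eq[OF assms(1,2) group.Fcentral_normal[OF assms(1,2)]] .


end
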